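(* Let $\mathcal{G}$ be a DAG and let $\mathbf{A}$ and $\mathbf{B}$ be disjoint vertex sets. Then there exists a unique subset $\mathbf{C}$ of $\mathbf{B}$ such that $\mathbf{A}\perp\!\!\!\perp_{\mathcal{G}}\mathbf{B}\setminus\mathbf{C}\mid\mathbf{C}$ and such that no strict subset $\mathbf{C}'$ of $\mathbf{C}$ satisfies $\mathbf{A}\perp\!\!\!\perp_{\mathcal{G}}\mathbf{B}\setminus\mathbf{C}'\mid\mathbf{C}'$.
   Context: $\mathbf{U}\perp\!\!\!\perp_{\mathcal{G}}\mathbf{W}\mid\mathbf{Z}$ denotes d-separation in the DAG $\mathcal{G}$ (with the convention that the statement is trivially true when $\mathbf{W}=\emptyset$). *)

theory Defs
  imports Main
begin

definition dag :: "'v set \<Rightarrow> ('v \<times> 'v) set \<Rightarrow> bool" where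
  "dag V E \<longleftrightarrow> finite V \<and> E \<subseteq> V \<times> V \<and> acyclic E"

definition adjacent :: "('v \<times> 'v) set \<Rightarrow> 'v \<Rightarrow> 'v \<Rightarrow> bool" where
  "adjacent E a b \<longleftrightarrow> (a, b) \<in> E \<or> (b, a) \<in> E"

definition is_path :: "'v set \<Rightarrow> ('v \<times> 'v) set \<Rightarrow> 'v list \<Rightarrow> bool" where
  "is_path V E p \<longleftrightarrow> p \<noteq> [] \<and> set p \<subseteq> V \<and> distinct p \<and>
     (\<forall>i. Suc i < length p \<longrightarrow> adjacent E (p ! i) (p ! Suc i))"

definition collider :: "('v \<times> 'v) set \<Rightarrow> 'v list \<Rightarrow> nat \<Rightarrow> bool" where
  "collider E p i \<longleftrightarrow> (p ! (i - 1), p ! i) \<in> E \<and> (p ! Suc i, p ! i) \<in> E"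

definition blocked :: "('v \<times> 'v) set \<Rightarrow> 'v set \<Rightarrow> 'v list \<Rightarrow> bool" where
  "blocked E Z p \<longleftrightarrow> (\<exists>i. 0 < i \<and> Suc i < length p \<and>
     ((\<not> collider E p i \<and> p ! i \<in> Z) \<or>
      (collider E p i \<and> \<not> (\<exists>z\<in>Z. (p ! i, z) \<in> E\<^sup>*))))"

definition d_separated :: "'v set \<Rightarrow> ('v \<times> 'v) set \<Rightarrow> 'v set \<Rightarrow> 'v set \<Rightarrow> 'v set \<Rightarrow> bool" where
  "d_separated V E U W Z \<longleftrightarrow> W = {} \<or>
     (\<forall>p. is_path V E p \<and> hd p \<in> U \<and> last p \<in> W \<longrightarrow> blocked E Z p)"

end

theory Submission
  imports Defs
begin

lemma take_blocked:
  assumes j: "j < length p"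
    and bl: "blocked E C (take (Suc j) p)"
    and sub: "Z \<subseteq> C" "C \<subseteq> B"
    and least: "\<And>i. i < j \<Longrightarrow> p ! i \<notin> B - Z"
  shows "blocked E Z p"
proof -
  let ?q = "take (Suc j) p"
  from bl obtain i where i: "0 < i" "Suc i < length ?q"
    and c: "(\<not> collider E ?q i \<and> ?q ! i \<in> C) \<or>
      (collider E ?q i \<and> \<not> (\<exists>z\<in>C. (?q ! i, z) \<in> E\<^sup>*))"
    unfolding blocked_def by blast
  have ij: "i < j" "Suc i < length p" using i j by auto
  have eq: "?q ! i = p ! i" "?q ! (i - 1) = p ! (i - 1)" "?q ! Suc i = p ! Suc i"
    using ij by auto
  have col: "collider E ?q i = collider E p i" unfolding collider_def eq ..
  have "p ! i \<notin> B - Z" using least ij by auto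
  show ?thesis unfolding blocked_def
  proof (rule exI[of _ i], intro conjI)
    show "0 < i" "Suc i < length p" using i ij by auto
    show "(\<not> collider E p i \<and> p ! i \<in> Z) \<or>
      (collider E p i \<and> \<not> (\<exists>z\<in>Z. (p ! i, z) \<in> E\<^sup>*))"
      using c col eq \<open>p ! i \<notin> B - Z\<close> sub by auto
  qed
qed

lemma take_path:
  assumes "is_path V E p" "j < length p"
  shows "is_path V E (take (Suc j) p)"
  using assms unfolding is_path_def
  by (auto dest: in_set_takeD)

lemma sep_inter:
  assumes s1: "d_separated V E A (B - C1) C1" and s2: "d_separated V E A (B - C2) C2"
    and c1: "C1 \<subseteq> B" and c2: "C2 \<subseteq> B"
  shows "d_separated V E A (B - (C1 \<inter> C2)) (C1 \<inter> C2)"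
  unfolding d_separated_def
proof (rule disjI2, intro allI impI)
  let ?Z = "C1 \<inter> C2"
  fix p assume p: "is_path V E p \<and> hd p \<in> A \<and> last p \<in> B - ?Z"
  hence ne: "p \<noteq> []" unfolding is_path_def by auto
  have ex: "\<exists>j. j < length p \<and> p ! j \<in> B - ?Z"
    using p ne by (auto simp: last_conv_nth intro!: exI[of _ "length p - 1"])
  define j where "j = (LEAST j. j < length p \<and> p ! j \<in> B - ?Z)"
  have jP: "j < length p \<and> p ! j \<in> B - ?Z" unfolding j_def by (rule LeastI_ex[OF ex])
  have least: "\<And>i. i < j \<Longrightarrow> p ! i \<notin> B - ?Z"
  proof -
    fix i assume "i < j"
    with jP have "i < length p" by auto
    show "p ! i \<notin> B - ?Z"
    proof
      assume "p ! i \<in> B - ?Z"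
      with \<open>i < length p\<close> have "j \<le> i" unfolding j_def by (auto intro: Least_le)
      with \<open>i < j\<close> show False by simp
    qed
  qed
  let ?q = "take (Suc j) p"
  have qp: "is_path V E ?q" using take_path p jP by blast
  have hq: "hd ?q = hd p" using ne by (simp add: hd_take)
  have lq: "last ?q = p ! j" using jP by (subst last_conv_nth) auto
  show "blocked E ?Z p"
  proof (cases "p ! j \<in> C1")
    case False
    with jP have "last ?q \<in> B - C1" using lq by auto
    hence "blocked E C1 ?q" using s1 qp hq p unfolding d_separated_def by auto
    thus ?thesis using take_blocked[of j p E C1 ?Z B] jP c1 least by auto
  next
    case True
    with jP have "last ?q \<in> B - C2" using lq by auto
    hence "blocked E C2 ?q" using s2 qp hq p unfolding d_separated_def by auto
    thus ?thesis using take_blocked[of j p E C2 ?Z B] jP c2 least by auto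
  qed
qed

theorem lemma7:
  fixes V :: "'v set" and E :: "('v \<times> 'v) set" and A B :: "'v set"
  assumes "dag V E" and "A \<subseteq> V" and "B \<subseteq> V" and "A \<inter> B = {}"
  shows "\<exists>!C. C \<subseteq> B \<and> d_separated V E A (B - C) C \<and>
           (\<forall>C'. C' \<subset> C \<longrightarrow> \<not> d_separated V E A (B - C') C')"
proof -
  let ?S = "\<lambda>C. C \<subseteq> B \<and> d_separated V E A (B - C) C"
  have fB: "finite B" using assms(1,3) unfolding dag_def by (auto intro: finite_subset)
  have exn: "\<exists>n C. ?S C \<and> card C = n"
    using assms by (auto simp: d_separated_def)
  define n where "n = (LEAST n. \<exists>C. ?S C \<and> card C = n)"
  obtain C where C: "?S C" "card C = n" using LeastI_ex[OF exn] unfolding n_def by blast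
  have minC: "\<forall>C'. C' \<subset> C \<longrightarrow> \<not> d_separated V E A (B - C') C'"
  proof (intro allI impI notI)
    fix C' assume "C' \<subset> C" "d_separated V E A (B - C') C'"
    hence S': "?S C'" using C by auto
    have "finite C" using C fB by (auto intro: finite_subset)
    hence "card C' < n" using \<open>C' \<subset> C\<close> C psubset_card_mono by metis
    moreover have "n \<le> card C'" unfolding n_def using S' by (auto intro: Least_le)
    ultimately show False by simp
  qed
  show ?thesis
  proof (rule ex1I[of _ C])
    show "C \<subseteq> B \<and> d_separated V E A (B - C) C \<and> (\<forall>C'. C' \<subset> C \<longrightarrow> \<not> d_separated V E A (B - C') C')" using C minC by auto
  next
    fix D assume D: "D \<subseteq> B \<and> d_separated V E A (B - D) D \<and> (\<forall>C'. C' \<subset> D \<longrightarrow> \<not> d_separated V E A (B - C') C')"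
    have I: "d_separated V E A (B - (D \<inter> C)) (D \<inter> C)"
      using sep_inter[of V E A B D C] D C by auto
    have "\<not> D \<inter> C \<subset> D" using D I by blast
    moreover have "\<not> D \<inter> C \<subset> C" using minC I by (metis Int_commute)
    ultimately show "D = C" by blast
  qed
qed

end
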